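(* An element $T\in\underline{SST}(\nu)$ is distinguished if and only if $\sum_{j=1}^k\mathrm{wt}(T_j)=0$.
   Context: Identify a partition $\lambda=(a_1\ge a_2\ge\cdots)$ with $\sum_ja_j\epsilon_j$ in $\Lambda=\bigoplus_{j\ge1}\mathbb Z\epsilon_j$; put $\omega_i=\epsilon_1+\dots+\epsilon_i$; partitions are exactly the elements of $\Lambda$ with all $\omega$-coordinates $\ge0$. For $x,y\in\Lambda$, $y\le x$ means $x-y$ has all $\omega$-coordinates $\ge0$. $\mathcal P$ = set of partitions, $\mathcal P^k$ = $k$-tuples of partitions. $SST(\nu)$ = semistandard tableaux of shape $\nu$ with entries in $\mathbb Z_{>0}$, with the standard $\mathfrak{gl}_\infty$-crystal structure (operators $\tilde e_i$, $i\ge1$). For $T\in SST(\nu)$: $\mathrm{wt}(T)=\sum_j(\#\text{entries }j)\epsilon_j$, $\varepsilon_i(T)=\max\{m\ge0:\tilde e_i^mT\ne0\}$, $\varepsilon(T)=\sum_i\varepsilon_i(T)\omega_i$. $\mathrm{CLR}^\lambda_{\alpha,\nu}=\{T\in SST(\nu):\varepsilon(T)\le\alpha,\ \alpha+\mathrm{wt}(T)=\lambda\}$. Fix $k\ge1$ and partitions $\nu=(\nu_1^+,\nu_1^-,\dots,\nu_k^+,\nu_k^-)$; indices cyclic mod $k$ ($\lambda_0:=\lambda_k$). $\underline{SST}(\nu)=\prod_{i=1}^kSST(\nu_i^+)\times SST(\nu_i^-)$, elements $T=(T_1^+,T_1^-,\dots,T_k^+,T_k^-)$, $T_i=(T_i^+,T_i^-)$,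 $\mathrm{wt}(T_i)=\mathrm{wt}(T_i^+)-\mathrm{wt}(T_i^-)$. For $\lambda,\alpha\in\mathcal P^k$, $\underline{\mathrm{CLR}}^\lambda_{\alpha,\nu}=\prod_{i=1}^k\mathrm{CLR}^{\lambda_i}_{\alpha_i,\nu_i^+}\times\mathrm{CLR}^{\lambda_{i-1}}_{\alpha_i,\nu_i^-}$. $T\in\underline{SST}(\nu)$ is called distinguished if $T\in\underline{\mathrm{CLR}}^\lambda_{\alpha,\nu}$ for some $\lambda,\alpha\in\mathcal P^k$. *)

theory Defs
  imports Main
begin

text \<open>An element \<open>\<Sum>_{j\<ge>1} a_j \<epsilon>_j\<close> of \<Lambda> is represented by the function
  \<open>x :: nat \<Rightarrow> int\<close> with \<open>x j = a_j\<close> for \<open>j \<ge> 1\<close>, \<open>x 0 = 0\<close>, and finite support.\<close>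

definition Lam :: "(nat \<Rightarrow> int) set" where
  "Lam = {x. x 0 = 0 \<and> finite {j. x j \<noteq> 0}}"

text \<open>The i-th omega-coordinate (i \<ge> 1): since \<epsilon>_j = \<omega>_j - \<omega>_(j-1),
  x = \<Sum>_i (a_i - a_(i+1)) \<omega>_i.\<close>
definition omega_coord :: "(nat \<Rightarrow> int) \<Rightarrow> nat \<Rightarrow> int" where
  "omega_coord x i = x i - x (Suc i)"

definition lam_le :: "(nat \<Rightarrow> int) \<Rightarrow> (nat \<Rightarrow> int) \<Rightarrow> bool" where
  "lam_le y x \<longleftrightarrow> (\<forall>i\<ge>1. omega_coord (\<lambda>j. x j - y j) i \<ge> 0)"

definition is_partition :: "(nat \<Rightarrow> int) \<Rightarrow> bool" where
  "is_partition x \<longleftrightarrow> x \<in> Lam \<and> (\<forall>i\<ge>1. omega_coord x i \<ge> 0)"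

text \<open>A tableau of shape \<nu> is a function on cells (row, column), rows and columns
  numbered from 1; the cells are \<open>(r,c)\<close> with \<open>r \<ge> 1\<close>, \<open>1 \<le> c \<le> \<nu> r\<close>;
  outside the shape the function is 0 (canonical representative).\<close>

definition in_shape :: "(nat \<Rightarrow> int) \<Rightarrow> nat \<times> nat \<Rightarrow> bool" where
  "in_shape \<nu> rc \<longleftrightarrow> 1 \<le> fst rc \<and> 1 \<le> snd rc \<and> int (snd rc) \<le> \<nu> (fst rc)"

definition SST :: "(nat \<Rightarrow> int) \<Rightarrow> (nat \<times> nat \<Rightarrow> nat) set" where
  "SST \<nu> = {T. (\<forall>rc. \<not> in_shape \<nu> rc \<longrightarrow> T rc = 0)
     \<and> (\<forall>rc. in_shape \<nu> rc \<longrightarrow> T rc \<ge> 1)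
     \<and> (\<forall>r c. in_shape \<nu> (r, Suc c) \<longrightarrow> T (r, c) \<le> T (r, Suc c) \<or> c = 0)
     \<and> (\<forall>r c. in_shape \<nu> (Suc r, c) \<longrightarrow> T (r, c) < T (Suc r, c) \<or> r = 0)}"

definition wt :: "(nat \<Rightarrow> int) \<Rightarrow> (nat \<times> nat \<Rightarrow> nat) \<Rightarrow> nat \<Rightarrow> int" where
  "wt \<nu> T j = (if j = 0 then 0 else int (card {rc. in_shape \<nu> rc \<and> T rc = j}))"

definition num_rows :: "(nat \<Rightarrow> int) \<Rightarrow> nat" where
  "num_rows \<nu> = card {r. 1 \<le> r \<and> \<nu> r > 0}"

definition reading_cells :: "(nat \<Rightarrow> int) \<Rightarrow> (nat \<times> nat) list" where
  "reading_cells \<nu> = concat (map (\<lambda>r. map (\<lambda>c. (r, c)) [1..<nat (\<nu> r) + 1])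
                                  (rev [1..<num_rows \<nu> + 1]))"

text \<open>Bracketing: scanning the word left to right, each letter i+1 is pushed,
  each letter i cancels the most recent unpaired i+1 (if any).  The result is the
  stack of positions of unpaired letters i+1 (most recent first).\<close>
fun sig_stack :: "nat \<Rightarrow> (nat \<times> nat) list \<Rightarrow> nat list \<Rightarrow> nat list" where
  "sig_stack i [] st = st"
| "sig_stack i ((p, x) # w) st =
     (if x = Suc i then sig_stack i w (p # st)
      else if x = i then sig_stack i w (drop 1 st)
      else sig_stack i w st)"

text \<open>Kashiwara operator \<open>e~_i\<close>: change the leftmost unpaired i+1 into i;
  \<open>None\<close> represents 0.\<close>
definition e_op :: "(nat \<Rightarrow> int) \<Rightarrow> nat \<Rightarrow> (nat \<times> nat \<Rightarrow> nat) \<Rightarrow> (nat \<times> nat \<Rightarrow> nat) option" where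
  "e_op \<nu> i T =
     (let cells = reading_cells \<nu>;
          st = sig_stack i (zip [0..<length cells] (map T cells)) []
      in if st = [] then None else Some (T (cells ! last st := i)))"

definition e_iter :: "(nat \<Rightarrow> int) \<Rightarrow> nat \<Rightarrow> nat \<Rightarrow> (nat \<times> nat \<Rightarrow> nat) \<Rightarrow> (nat \<times> nat \<Rightarrow> nat) option" where
  "e_iter \<nu> i m T = ((\<lambda>ot. Option.bind ot (e_op \<nu> i)) ^^ m) (Some T)"

definition crys_eps :: "(nat \<Rightarrow> int) \<Rightarrow> nat \<Rightarrow> (nat \<times> nat \<Rightarrow> nat) \<Rightarrow> nat" where
  "crys_eps \<nu> i T = (GREATEST m. e_iter \<nu> i m T \<noteq> None)"

text \<open>\<open>\<epsilon>(T) = \<Sum>_i \<epsilon>_i(T) \<omega>_i\<close>, as an element of \<Lambda>: its j-th coordinate is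
  \<open>\<Sum>_{i\<ge>j} \<epsilon>_i(T)\<close> (a finite sum).\<close>
definition eps_vec :: "(nat \<Rightarrow> int) \<Rightarrow> (nat \<times> nat \<Rightarrow> nat) \<Rightarrow> nat \<Rightarrow> int" where
  "eps_vec \<nu> T j = (if j = 0 then 0 else
      (\<Sum>i\<in>{i. j \<le> i \<and> crys_eps \<nu> i T \<noteq> 0}. int (crys_eps \<nu> i T)))"

definition CLR :: "(nat \<Rightarrow> int) \<Rightarrow> (nat \<Rightarrow> int) \<Rightarrow> (nat \<Rightarrow> int) \<Rightarrow> (nat \<times> nat \<Rightarrow> nat) set" where
  "CLR lam alpha \<nu> = {T \<in> SST \<nu>. lam_le (eps_vec \<nu> T) alpha \<and> (\<lambda>j. alpha j + wt \<nu> T j) = lam}"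

definition uSST :: "nat \<Rightarrow> (nat \<Rightarrow> nat \<Rightarrow> int) \<Rightarrow> (nat \<Rightarrow> nat \<Rightarrow> int)
     \<Rightarrow> ((nat \<Rightarrow> nat \<times> nat \<Rightarrow> nat) \<times> (nat \<Rightarrow> nat \<times> nat \<Rightarrow> nat)) set" where
  "uSST k nup num = {(Tp, Tm). \<forall>i<k. Tp i \<in> SST (nup i) \<and> Tm i \<in> SST (num i)}"

definition distinguished :: "nat \<Rightarrow> (nat \<Rightarrow> nat \<Rightarrow> int) \<Rightarrow> (nat \<Rightarrow> nat \<Rightarrow> int)
     \<Rightarrow> (nat \<Rightarrow> nat \<times> nat \<Rightarrow> nat) \<Rightarrow> (nat \<Rightarrow> nat \<times> nat \<Rightarrow> nat) \<Rightarrow> bool" where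
  "distinguished k nup num Tp Tm \<longleftrightarrow>
     (\<exists>lam alpha :: nat \<Rightarrow> nat \<Rightarrow> int.
        (\<forall>i<k. is_partition (lam i) \<and> is_partition (alpha i)) \<and>
        (\<forall>i<k. Tp i \<in> CLR (lam i) (alpha i) (nup i) \<and>
               Tm i \<in> CLR (lam ((i + k - 1) mod k)) (alpha i) (num i)))"

end

theory Submission imports Defs begin

definition Rv :: "int \<Rightarrow> nat \<Rightarrow> nat \<Rightarrow> int" where
  "Rv C M j = (if j = 0 then 0 else C * int (Suc M - j))"

lemma Rv_diff: "1 \<le> j \<Longrightarrow> j \<le> M \<Longrightarrow> Rv C M j - Rv C M (Suc j) = C"
  unfolding Rv_def by (simp add: Suc_diff_le algebra_simps)

lemma Rv_zero: "M < j \<Longrightarrow> Rv C M j = 0" by (simp add: Rv_def)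

lemma shift_omega:
  fixes x e :: "nat \<Rightarrow> int"
  assumes "\<forall>j>M. x j = 0" "\<forall>j. \<bar>x j\<bar> \<le> D" "2*D + E \<le> C" "\<forall>j. e j \<le> E"
    "\<forall>j>M. e j \<le> 0" "1 \<le> j"
  shows "e j \<le> (x j + Rv C M j) - (x (Suc j) + Rv C M (Suc j))"
proof (cases "j \<le> M")
  case True
  have "\<bar>x j\<bar> \<le> D" "\<bar>x (Suc j)\<bar> \<le> D" "e j \<le> E" using assms by auto
  moreover have "Rv C M j - Rv C M (Suc j) = C" using Rv_diff True assms(6) by auto
  ultimately show ?thesis using assms(3) by (auto simp: abs_le_iff)
next
  case False
  then show ?thesis using assms Rv_zero[of M j] Rv_zero[of M "Suc j"] by auto
qed

lemma sig_nil: "st = [] \<Longrightarrow> (\<forall>(p,x)\<in>set w. x \<noteq> Suc i) \<Longrightarrow> sig_stack i w st = []"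
  by (induction i w st rule: sig_stack.induct) auto

lemma crys_eps_zero:
  assumes "\<forall>rc. T rc \<le> i"
  shows "crys_eps \<nu> i T = 0"
proof -
  let ?cells = "reading_cells \<nu>"
  have "\<forall>(p,x)\<in>set (zip [0..<length ?cells] (map T ?cells)). x \<noteq> Suc i"
    using assms by (auto dest!: set_zip_rightD) (metis Suc_n_not_le_n)
  hence "sig_stack i (zip [0..<length ?cells] (map T ?cells)) [] = []"
    using sig_nil by blast
  hence e: "e_op \<nu> i T = None" unfolding e_op_def Let_def by simp
  have N: "e_iter \<nu> i (Suc m) T = None" for m
    by (induction m) (auto simp: e_iter_def e)
  have "(GREATEST m. e_iter \<nu> i m T \<noteq> None) = 0"
  proof (rule Greatest_equality)
    show "e_iter \<nu> i 0 T \<noteq> None" by (simp add: e_iter_def)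
    fix y assume "e_iter \<nu> i y T \<noteq> None" thus "y \<le> 0" using N by (cases y) auto
  qed
  thus ?thesis by (simp add: crys_eps_def)
qed

lemma eps_sum:
  assumes "\<forall>i\<ge>M. crys_eps \<nu> i T = 0" "1 \<le> j"
  shows "eps_vec \<nu> T j = (\<Sum>i\<in>{j..<M}. int (crys_eps \<nu> i T))"
proof -
  have sub: "{i. j \<le> i \<and> crys_eps \<nu> i T \<noteq> 0} \<subseteq> {j..<M}"
    using assms(1) by (auto simp: not_less[symmetric])
  have "(\<Sum>i\<in>{i. j \<le> i \<and> crys_eps \<nu> i T \<noteq> 0}. int (crys_eps \<nu> i T))
      = (\<Sum>i\<in>{j..<M}. int (crys_eps \<nu> i T))"
    by (rule sum.mono_neutral_left) (use sub in auto)
  thus ?thesis using assms(2) by (simp add: eps_vec_def)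
qed

lemma eps_diff:
  assumes "\<forall>i\<ge>M. crys_eps \<nu> i T = 0" "1 \<le> j"
  shows "eps_vec \<nu> T j - eps_vec \<nu> T (Suc j) = int (crys_eps \<nu> j T)"
proof (cases "j < M")
  case True
  thus ?thesis using eps_sum[OF assms] eps_sum[OF assms(1), of "Suc j"]
    by (simp add: sum.atLeast_Suc_lessThan)
next
  case False
  thus ?thesis using eps_sum[OF assms] eps_sum[OF assms(1), of "Suc j"] assms(1) by simp
qed

lemma finite_shape:
  assumes "\<nu> \<in> Lam" shows "finite {rc. in_shape \<nu> rc}"
proof -
  have "{rc. in_shape \<nu> rc} \<subseteq> Sigma {r. \<nu> r \<noteq> 0} (\<lambda>r. {..nat (\<nu> r)})"
    by (auto simp: in_shape_def)
  moreover have "finite (Sigma {r. \<nu> r \<noteq> 0} (\<lambda>r. {..nat (\<nu> r)}))"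
    using assms by (auto simp: Lam_def)
  ultimately show ?thesis using finite_subset by blast
qed

definition bd :: "(nat \<Rightarrow> int) \<Rightarrow> (nat \<times> nat \<Rightarrow> nat) \<Rightarrow> nat" where
  "bd \<nu> T = (\<Sum>q\<in>{rc. in_shape \<nu> rc}. T q)"

lemma le_bd: assumes "T \<in> SST \<nu>" "\<nu> \<in> Lam" shows "T rc \<le> bd \<nu> T"
proof (cases "in_shape \<nu> rc")
  case True
  thus ?thesis unfolding bd_def by (intro member_le_sum finite_shape assms(2)) auto
next
  case False thus ?thesis using assms(1) unfolding SST_def by (cases rc) auto
qed

lemma wt_zero: "\<forall>rc. T rc \<le> M \<Longrightarrow> M < j \<Longrightarrow> wt \<nu> T j = 0"
proof -
  assume a: "\<forall>rc. T rc \<le> M" "M < j"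
  have "{rc. in_shape \<nu> rc \<and> T rc = j} = {}" using a by (metis (mono_tags) empty_Collect_eq leD)
  thus ?thesis unfolding wt_def by (simp only: card.empty) simp
qed

lemma wt_zero0: "wt \<nu> T 0 = 0" by (simp add: wt_def)

lemma cyc_sum:
  fixes f :: "nat \<Rightarrow> int"
  assumes "k \<ge> 1" shows "(\<Sum>i<k. f ((i + k - 1) mod k)) = (\<Sum>i<k. f i)"
proof -
  obtain k' where k: "k = Suc k'" using assms by (cases k) auto
  have "(\<Sum>i<Suc k'. f ((i + Suc k' - 1) mod Suc k')) = f k' + (\<Sum>i<k'. f ((Suc i + k') mod Suc k'))"
    by (simp only: sum.lessThan_Suc_shift) simp
  also have "(\<Sum>i<k'. f ((Suc i + k') mod Suc k')) = (\<Sum>i<k'. f i)"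
  proof (rule sum.cong)
    fix i assume "i \<in> {..<k'}"
    hence "(Suc i + k') mod Suc k' = i"
      by (metis add.commute add_Suc_right lessThan_iff less_SucI mod_add_self2 mod_less)
    thus "f ((Suc i + k') mod Suc k') = f i" by simp
  qed simp
  finally show ?thesis using k by simp
qed


theorem mainTheorem8:
  fixes k :: nat
    and nup num :: "nat \<Rightarrow> nat \<Rightarrow> int"
    and Tp Tm :: "nat \<Rightarrow> nat \<times> nat \<Rightarrow> nat"
  assumes "k \<ge> 1"
    and "\<forall>i<k. is_partition (nup i) \<and> is_partition (num i)"
    and "(Tp, Tm) \<in> uSST k nup num"
  shows "distinguished k nup num Tp Tm \<longleftrightarrow>
         (\<lambda>m. \<Sum>j<k. wt (nup j) (Tp j) m - wt (num j) (Tm j) m) = (\<lambda>m. 0)"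
proof
  assume "distinguished k nup num Tp Tm"
  then obtain lam alpha :: "nat \<Rightarrow> nat \<Rightarrow> int" where
    c: "\<forall>i<k. Tp i \<in> CLR (lam i) (alpha i) (nup i) \<and>
               Tm i \<in> CLR (lam ((i + k - 1) mod k)) (alpha i) (num i)"
    unfolding distinguished_def by blast
  show "(\<lambda>m. \<Sum>j<k. wt (nup j) (Tp j) m - wt (num j) (Tm j) m) = (\<lambda>m. 0)"
  proof
    fix m
    have "\<forall>i<k. wt (nup i) (Tp i) m - wt (num i) (Tm i) m = lam i m - lam ((i + k - 1) mod k) m"
    proof (intro allI impI)
      fix i assume "i < k"
      hence "(\<lambda>j. alpha i j + wt (nup i) (Tp i) j) = lam i"
        "(\<lambda>j. alpha i j + wt (num i) (Tm i) j) = lam ((i + k - 1) mod k)"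
        using c by (auto simp: CLR_def)
      from fun_cong[OF this(1), of m] fun_cong[OF this(2), of m]
      show "wt (nup i) (Tp i) m - wt (num i) (Tm i) m = lam i m - lam ((i + k - 1) mod k) m"
        by simp
    qed
    hence "(\<Sum>j<k. wt (nup j) (Tp j) m - wt (num j) (Tm j) m)
        = (\<Sum>j<k. lam j m - lam ((j + k - 1) mod k) m)" by (intro sum.cong) auto
    also have "\<dots> = 0"
      using cyc_sum[OF assms(1), of "\<lambda>i. lam i m"] by (simp add: sum_subtractf)
    finally show "(\<Sum>j<k. wt (nup j) (Tp j) m - wt (num j) (Tm j) m) = 0" .
  qed
next
  assume H: "(\<lambda>m. \<Sum>j<k. wt (nup j) (Tp j) m - wt (num j) (Tm j) m) = (\<lambda>m. 0)"
  define wp where "wp i = wt (nup i) (Tp i)" for i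
  define wm where "wm i = wt (num i) (Tm i)" for i
  define S where "S i j = (\<Sum>l<i. wp l j - wm l j)" for i j
  have Sk: "S k j = 0" for j using fun_cong[OF H, of j] by (simp add: S_def wp_def wm_def)
  have sst: "\<forall>i<k. Tp i \<in> SST (nup i) \<and> Tm i \<in> SST (num i)"
    using assms(3) by (simp add: uSST_def)
  have lam: "\<forall>i<k. nup i \<in> Lam \<and> num i \<in> Lam" using assms(2) by (simp add: is_partition_def)
  define M where "M = (\<Sum>i<k. bd (nup i) (Tp i) + bd (num i) (Tm i))"
  have TM: "Tp i rc \<le> M \<and> Tm i rc \<le> M" if "i < k" for i rc
  proof -
    have "bd (nup i) (Tp i) + bd (num i) (Tm i) \<le> M"
      unfolding M_def by (rule member_le_sum) (use that in auto)
    thus ?thesis using le_bd[of "Tp i" "nup i" rc] le_bd[of "Tm i" "num i" rc] sst lam that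
      by fastforce
  qed
  have wp0: "wp i j = 0" "wm i j = 0" if "i < k" "M < j" for i j
    using wt_zero[of "Tp i" M j] wt_zero[of "Tm i" M j] TM[OF that(1)] that
    by (auto simp: wp_def wm_def)
  have wp00: "wp i 0 = 0" "wm i 0 = 0" for i by (auto simp: wp_def wm_def wt_zero0)
  have ce0: "crys_eps (nup i) j (Tp i) = 0" "crys_eps (num i) j (Tm i) = 0" if "i < k" "M \<le> j" for i j
    using crys_eps_zero TM[OF that(1)] that(2) by (meson le_trans)+
  define G where "G l j = \<bar>wp l j\<bar> + \<bar>wm l j\<bar>" for l j
  define Hb where "Hb l = (\<Sum>j'\<le>M. G l j')" for l
  define D where "D = (\<Sum>l<k. Hb l)"
  have G0: "0 \<le> G l j" for l j by (simp add: G_def)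
  have Hb0: "0 \<le> Hb l" for l unfolding Hb_def by (intro sum_nonneg) (simp add: G0)
  have GH: "G l j \<le> Hb l" if "l < k" for l j
  proof (cases "j \<le> M")
    case True thus ?thesis unfolding Hb_def by (intro member_le_sum) (auto simp: G0)
  next
    case False thus ?thesis using wp0[OF that] Hb0 by (simp add: G_def)
  qed
  have sumG: "\<bar>S i j\<bar> \<le> (\<Sum>l<i. G l j)" for i j
    unfolding S_def G_def
    by (rule order_trans[OF sum_abs], rule sum_mono) (simp add: abs_triangle_ineq4)
  have HD: "(\<Sum>l<i. Hb l) \<le> D" if "i \<le> k" for i
    unfolding D_def by (rule sum_mono2) (use that Hb0 in auto)
  have SD: "\<bar>S i j\<bar> \<le> D" if "i \<le> k" for i j
  proof -
    have "(\<Sum>l<i. G l j) \<le> (\<Sum>l<i. Hb l)" by (rule sum_mono) (use GH that in auto)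
    thus ?thesis using sumG[of i j] HD[OF that] by linarith
  qed
  have SmD: "\<bar>S i j - wm i j\<bar> \<le> D" if "i < k" for i j
  proof -
    have "\<bar>S i j - wm i j\<bar> \<le> (\<Sum>l<i. G l j) + G i j"
      using sumG[of i j] by (simp add: G_def)
    also have "\<dots> = (\<Sum>l<Suc i. G l j)" by simp
    also have "\<dots> \<le> (\<Sum>l<Suc i. Hb l)" by (rule sum_mono) (use GH that in auto)
    also have "\<dots> \<le> D" using HD[of "Suc i"] that by simp
    finally show ?thesis .
  qed
  have D0: "0 \<le> D" unfolding D_def by (intro sum_nonneg Hb0)
  define E where "E = (\<Sum>i<k. \<Sum>j<M. int (crys_eps (nup i) j (Tp i)) + int (crys_eps (num i) j (Tm i)))"
  have E1: "int (crys_eps (nup i) j (Tp i)) \<le> E \<and> int (crys_eps (num i) j (Tm i)) \<le> E"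
    if "i < k" for i j
  proof (cases "j < M")
    case True
    have "int (crys_eps (nup i) j (Tp i)) + int (crys_eps (num i) j (Tm i))
       \<le> (\<Sum>j<M. int (crys_eps (nup i) j (Tp i)) + int (crys_eps (num i) j (Tm i)))"
      by (rule member_le_sum) (use True in auto)
    also have "\<dots> \<le> E" unfolding E_def by (rule member_le_sum) (use that in \<open>auto intro: sum_nonneg\<close>)
    finally show ?thesis by simp
  next
    case False
    have "0 \<le> E" unfolding E_def by (auto intro!: sum_nonneg)
    thus ?thesis using ce0[OF that] False by simp
  qed
  have E0: "0 \<le> E" unfolding E_def by (auto intro!: sum_nonneg)
  define C where "C = 2 * D + E"
  define lamv where "lamv i j = S (Suc i) j + Rv C M j" for i j
  define alv where "alv i j = S i j - wm i j + Rv C M j" for i j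
  have S0: "S i j = 0" if "i \<le> k" "M < j" for i j
    unfolding S_def using wp0 that by (intro sum.neutral) auto
  have S00: "S i 0 = 0" for i unfolding S_def using wp00 by simp
  have inLam: "(\<lambda>j. x j + Rv C M j) \<in> Lam" if "x 0 = 0" "\<forall>j>M. x j = 0" for x
  proof -
    have "{j. x j + Rv C M j \<noteq> 0} \<subseteq> {..M}" using that Rv_zero[of M _ C] by (metis (mono_tags) add.right_neutral atMost_iff mem_Collect_eq not_le subsetI)
    hence "finite {j. x j + Rv C M j \<noteq> 0}" using finite_subset by blast
    thus ?thesis using that by (simp add: Lam_def Rv_def)
  qed
  have part: "is_partition (\<lambda>j. x j + Rv C M j)" if "x 0 = 0" "\<forall>j>M. x j = 0" "\<forall>j. \<bar>x j\<bar> \<le> D" for x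
    unfolding is_partition_def omega_coord_def
    using inLam[OF that(1,2)] shift_omega[of M x D 0 C "\<lambda>_. 0"] that D0 E0 by (auto simp: C_def)
  have eps_ok: "lam_le (eps_vec \<nu> T) (\<lambda>j. x j + Rv C M j)"
    if "\<forall>j>M. x j = 0" "\<forall>j. \<bar>x j\<bar> \<le> D" "\<forall>j. int (crys_eps \<nu> j T) \<le> E"
       "\<forall>j\<ge>M. crys_eps \<nu> j T = 0" for x \<nu> T
    unfolding lam_le_def omega_coord_def
  proof (intro allI impI)
    fix i :: nat assume i: "1 \<le> i"
    have "int (crys_eps \<nu> i T) \<le> (x i + Rv C M i) - (x (Suc i) + Rv C M (Suc i))"
      by (rule shift_omega[of M x D E C "\<lambda>j. int (crys_eps \<nu> j T)"]) (use that i in \<open>auto simp: C_def\<close>)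
    thus "0 \<le> x i + Rv C M i - eps_vec \<nu> T i - (x (Suc i) + Rv C M (Suc i) - eps_vec \<nu> T (Suc i))"
      using eps_diff[OF that(4) i] by linarith
  qed
  show "distinguished k nup num Tp Tm"
    unfolding distinguished_def
  proof (rule exI[of _ lamv], rule exI[of _ alv], intro conjI allI impI)
    fix i assume i: "i < k"
    show "is_partition (lamv i)" unfolding lamv_def
      by (rule part) (use i S00 S0 SD in auto)
    have "is_partition (alv i)"
      unfolding alv_def using part[of "\<lambda>j. S i j - wm i j"] i S00 wp00 S0 wp0 SmD by auto
    then show "is_partition (alv i)" .
    have xprops: "\<forall>j>M. S i j - wm i j = 0" "\<forall>j. \<bar>S i j - wm i j\<bar> \<le> D"
      using i S0 wp0 SmD by auto
    show "Tp i \<in> CLR (lamv i) (alv i) (nup i)"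
      unfolding CLR_def
    proof (intro CollectI conjI)
      show "Tp i \<in> SST (nup i)" using sst i by auto
      show "lam_le (eps_vec (nup i) (Tp i)) (alv i)" unfolding alv_def
        using eps_ok[of "\<lambda>j. S i j - wm i j"] xprops E1[OF i] ce0[OF i] by auto
      show "(\<lambda>j. alv i j + wt (nup i) (Tp i) j) = lamv i"
        by (auto simp: alv_def lamv_def S_def wp_def)
    qed
    show "Tm i \<in> CLR (lamv ((i + k - 1) mod k)) (alv i) (num i)"
      unfolding CLR_def
    proof (intro CollectI conjI)
      show "Tm i \<in> SST (num i)" using sst i by auto
      show "lam_le (eps_vec (num i) (Tm i)) (alv i)" unfolding alv_def
        using eps_ok[of "\<lambda>j. S i j - wm i j"] xprops E1[OF i] ce0[OF i] by auto
      show "(\<lambda>j. alv i j + wt (num i) (Tm i) j) = lamv ((i + k - 1) mod k)"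
      proof (cases i)
        case 0
        have "(0 + k - 1) mod k = k - 1" using assms(1) by simp
        moreover have "Suc (k - 1) = k" using assms(1) by simp
        ultimately show ?thesis using 0 Sk
          by (auto simp: alv_def lamv_def wm_def S_def)
      next
        case (Suc i')
        have "(i + k - 1) mod k = i'" using i Suc by simp
        thus ?thesis using Suc by (auto simp: alv_def lamv_def wm_def)
      qed
    qed
  qed
qed

end
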